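(* There is an absolute constant $c>0$ such that for all positive integers $f,l$ there exist integers $(M_C)_C$ such that the hypercube Hamiltonian $H=\sum_C\bigl(\sum_{i\in C}S_i-M_C\bigr)^2$ on $N=l^f$ variables has at least $2^N\bigl(\frac{c}{f\sqrt l}\bigr)^{n_C}$ global minima, all of which are $(2^f-1)$-minima.
   Context: Fix positive integers $f,l$ and let $N=l^f$. The variables $S_i\in\{-1,+1\}$ are indexed by vectors $i=(x_1,\dots,x_f)$ with $x_a\in\{1,\dots,l\}$. A column $C$ is specified by an index $b\in\{1,\dots,f\}$ and integers $y_a\in\{1,\dots,l\}$ for all $a\neq b$; a variable $(x_1,\dots,x_f)$ lies in $C$ iff $x_a=y_a$ for all $a\neq b$. The number of columns is $n_C=f\,l^{f-1}$. Given an integer $M_C$ for each column, $H(S)=\sum_C\bigl(\sum_{i\in C}S_i-M_C\bigr)^2$. A global minimum is an assignment minimizing $H$. For an integer $k\geq1$, an assignment $A$ is a $k$-minimum of $H$ if every assignment differing from $A$ in at least one and at most $k$ variables has a strictly larger value of $H$ than $A$. *)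

theory Defs
  imports Complex_Main "HOL-Library.FuncSet"
begin

definition Vars :: "nat \<Rightarrow> nat \<Rightarrow> (nat \<Rightarrow> nat) set" where
  "Vars f l = PiE {1..f} (\<lambda>_. {1..l})"

text \<open>A column is a pair (b, y) with b in {1..f} and y giving y_a in {1..l} for a ~= b.\<close>
definition Cols :: "nat \<Rightarrow> nat \<Rightarrow> (nat \<times> (nat \<Rightarrow> nat)) set" where
  "Cols f l = Sigma {1..f} (\<lambda>b. PiE ({1..f} - {b}) (\<lambda>_. {1..l}))"

definition col :: "nat \<Rightarrow> nat \<Rightarrow> nat \<times> (nat \<Rightarrow> nat) \<Rightarrow> (nat \<Rightarrow> nat) set" where
  "col f l C = {x \<in> Vars f l. \<forall>a \<in> {1..f} - {fst C}. x a = snd C a}"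

definition Assigns :: "nat \<Rightarrow> nat \<Rightarrow> ((nat \<Rightarrow> nat) \<Rightarrow> int) set" where
  "Assigns f l = PiE (Vars f l) (\<lambda>_. {-1, 1})"

definition Ham :: "nat \<Rightarrow> nat \<Rightarrow> (nat \<times> (nat \<Rightarrow> nat) \<Rightarrow> int) \<Rightarrow> ((nat \<Rightarrow> nat) \<Rightarrow> int) \<Rightarrow> int" where
  "Ham f l M S = (\<Sum>C \<in> Cols f l. ((\<Sum>i \<in> col f l C. S i) - M C)^2)"

definition global_min :: "nat \<Rightarrow> nat \<Rightarrow> (nat \<times> (nat \<Rightarrow> nat) \<Rightarrow> int) \<Rightarrow> ((nat \<Rightarrow> nat) \<Rightarrow> int) \<Rightarrow> bool" where
  "global_min f l M S \<longleftrightarrow> S \<in> Assigns f l \<and> (\<forall>T \<in> Assigns f l. Ham f l M S \<le> Ham f l M T)"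

definition k_min :: "nat \<Rightarrow> nat \<Rightarrow> (nat \<times> (nat \<Rightarrow> nat) \<Rightarrow> int) \<Rightarrow> nat \<Rightarrow> ((nat \<Rightarrow> nat) \<Rightarrow> int) \<Rightarrow> bool" where
  "k_min f l M k S \<longleftrightarrow> S \<in> Assigns f l \<and>
     (\<forall>T \<in> Assigns f l. 1 \<le> card {i \<in> Vars f l. T i \<noteq> S i} \<and> card {i \<in> Vars f l. T i \<noteq> S i} \<le> k
        \<longrightarrow> Ham f l M S < Ham f l M T)"

end

theory Submission
  imports Defs
begin


lemma support_bound:
  fixes d :: "(nat \<Rightarrow> nat) \<Rightarrow> int"
  assumes "finite I" "finite {x. d x \<noteq> 0}" "{x. d x \<noteq> 0} \<noteq> {}"
    "\<forall>a\<in>I. \<forall>x. (\<Sum>y\<in>{y. d y \<noteq> 0 \<and> (\<forall>b. b \<noteq> a \<longrightarrow> y b = x b)}. d y) = 0"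
  shows "2 ^ card I \<le> card {x. d x \<noteq> 0}"
  using assms
proof (induction I arbitrary: d rule: finite_induct)
  case empty
  then show ?case by (simp add: Suc_leI card_gt_0_iff)
next
  case (insert a J d)
  let ?D = "{x. d x \<noteq> 0}"
  obtain x0 where x0: "d x0 \<noteq> 0" using insert.prems(2) by auto
  define L where "L = {y. d y \<noteq> 0 \<and> (\<forall>b. b \<noteq> a \<longrightarrow> y b = x0 b)}"
  have Lsum: "(\<Sum>y\<in>L. d y) = 0" using insert.prems(3) unfolding L_def by auto
  have x0L: "x0 \<in> L" using x0 unfolding L_def by auto
  have finL: "finite L" using insert.prems(1) unfolding L_def by (rule rev_finite_subset) auto
  have "\<exists>y0\<in>L. y0 \<noteq> x0"
  proof (rule ccontr)
    assume "\<not> ?thesis"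
    hence "L = {x0}" using x0L by blast
    thus False using Lsum x0 by simp
  qed
  then obtain y0 where y0: "y0 \<in> L" "y0 \<noteq> x0" by blast
  have ya: "y0 a \<noteq> x0 a"
  proof
    assume "y0 a = x0 a"
    hence "y0 = x0" using y0(1) unfolding L_def by (auto intro!: ext)
    thus False using y0(2) by simp
  qed
  have dy0: "d y0 \<noteq> 0" using y0(1) unfolding L_def by auto
  define dt where "dt t = (\<lambda>x. if x a = t then d x else 0)" for t
  have Dt: "{x. dt t x \<noteq> 0} = {x \<in> ?D. x a = t}" for t unfolding dt_def by auto
  have slice: "2 ^ card J \<le> card {x \<in> ?D. x a = t}" if "x1 \<in> ?D" "x1 a = t" for t x1
  proof -
    have "2 ^ card J \<le> card {x. dt t x \<noteq> 0}"
    proof (rule insert.IH)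
      show "finite {x. dt t x \<noteq> 0}" unfolding Dt using insert.prems(1) by auto
      show "{x. dt t x \<noteq> 0} \<noteq> {}" unfolding Dt using that by auto
      show "\<forall>b\<in>J. \<forall>x. (\<Sum>y\<in>{y. dt t y \<noteq> 0 \<and> (\<forall>c. c \<noteq> b \<longrightarrow> y c = x c)}. dt t y) = 0"
      proof (intro ballI allI)
        fix b x assume b: "b \<in> J"
        have ba: "b \<noteq> a" using b insert.hyps(2) by auto
        show "(\<Sum>y\<in>{y. dt t y \<noteq> 0 \<and> (\<forall>c. c \<noteq> b \<longrightarrow> y c = x c)}. dt t y) = 0"
        proof (cases "x a = t")
          case True
          have eq: "{y. dt t y \<noteq> 0 \<and> (\<forall>c. c \<noteq> b \<longrightarrow> y c = x c)} = {y. d y \<noteq> 0 \<and> (\<forall>c. c \<noteq> b \<longrightarrow> y c = x c)}"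
            unfolding dt_def using True ba by auto
          have "(\<Sum>y\<in>{y. d y \<noteq> 0 \<and> (\<forall>c. c \<noteq> b \<longrightarrow> y c = x c)}. dt t y) = (\<Sum>y\<in>{y. d y \<noteq> 0 \<and> (\<forall>c. c \<noteq> b \<longrightarrow> y c = x c)}. d y)"
            by (rule sum.cong) (use True ba in \<open>auto simp: dt_def\<close>)
          also have "\<dots> = 0" using insert.prems(3) b by auto
          finally show ?thesis unfolding eq .
        next
          case False
          have "{y. dt t y \<noteq> 0 \<and> (\<forall>c. c \<noteq> b \<longrightarrow> y c = x c)} = {}"
            unfolding dt_def using False ba by auto
          thus ?thesis by (simp only: sum.empty)
        qed
      qed
    qed
    thus ?thesis unfolding Dt .
  qed
  have s1: "2 ^ card J \<le> card {x \<in> ?D. x a = x0 a}" using slice[of x0] x0 by auto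
  have s2: "2 ^ card J \<le> card {x \<in> ?D. x a = y0 a}" using slice[of y0] dy0 by auto
  have disj: "{x \<in> ?D. x a = x0 a} \<inter> {x \<in> ?D. x a = y0 a} = {}" using ya by auto
  have "card ({x \<in> ?D. x a = x0 a} \<union> {x \<in> ?D. x a = y0 a}) = card {x \<in> ?D. x a = x0 a} + card {x \<in> ?D. x a = y0 a}"
    by (rule card_Un_disjoint) (use insert.prems(1) disj in auto)
  moreover have "card ({x \<in> ?D. x a = x0 a} \<union> {x \<in> ?D. x a = y0 a}) \<le> card ?D"
    by (rule card_mono) (use insert.prems(1) in auto)
  ultimately show ?case using s1 s2 insert.hyps by simp
qed



lemma finite_Vars: "finite (Vars f l)" by (simp add: Vars_def finite_PiE)
lemma card_Vars: "card (Vars f l) = l ^ f" by (simp add: Vars_def card_PiE)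
lemma finite_Assigns: "finite (Assigns f l)" by (simp add: Assigns_def finite_PiE finite_Vars)
lemma card_Assigns: "card (Assigns f l) = 2 ^ (l ^ f)"
  by (simp add: Assigns_def card_PiE finite_Vars card_Vars numeral_2_eq_2)
lemma finite_Cols: "finite (Cols f l)" by (simp add: Cols_def finite_PiE)
lemma card_Cols: "card (Cols f l) = f * l ^ (f - 1)"
proof -
  have "card (Cols f l) = (\<Sum>b\<in>{1..f}. card (PiE ({1..f} - {b}) (\<lambda>_. {1..l})))"
    unfolding Cols_def by (rule card_SigmaI) (auto simp: finite_PiE)
  also have "\<dots> = (\<Sum>b\<in>{1..f}. l ^ (f - 1))"
  proof (rule sum.cong)
    fix b assume "b \<in> {1..f}"
    hence "card ({1..f} - {b}) = f - 1" by simp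
    thus "card (PiE ({1..f} - {b}) (\<lambda>_. {1..l})) = l ^ (f - 1)" by (simp add: card_PiE)
  qed simp
  also have "\<dots> = f * l ^ (f - 1)" by simp
  finally show ?thesis .
qed
lemma col_sub: "col f l C \<subseteq> Vars f l" by (auto simp: col_def)
lemma finite_col: "finite (col f l C)" using col_sub finite_Vars by (rule finite_subset)
lemma card_col: assumes "C \<in> Cols f l" shows "card (col f l C) \<le> l"
proof -
  have b: "fst C \<in> {1..f}" using assms unfolding Cols_def by (metis SigmaD1 prod.collapse)
  have "inj_on (\<lambda>y. y (fst C)) (col f l C)"
  proof (rule inj_onI)
    fix x y assume xy: "x \<in> col f l C" "y \<in> col f l C" "x (fst C) = y (fst C)"
    show "x = y"
    proof (rule PiE_ext[of _ "{1..f}" "\<lambda>_. {1..l}"])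
      show "x \<in> PiE {1..f} (\<lambda>_. {1..l})" "y \<in> PiE {1..f} (\<lambda>_. {1..l})"
        using xy unfolding col_def Vars_def by blast+
      fix i assume i: "i \<in> {1..f}" 
      show "x i = y i"
      proof (cases "i = fst C")
        case False
        hence "x i = snd C i" "y i = snd C i" using xy(1,2) i unfolding col_def by blast+
        thus ?thesis by simp
      qed (use xy(3) in simp)
    qed
  qed
  moreover have "(\<lambda>y. y (fst C)) ` col f l C \<subseteq> {1..l}" 
  proof
    fix z assume "z \<in> (\<lambda>y. y (fst C)) ` col f l C"
    then obtain y where y: "y \<in> col f l C" "z = y (fst C)" by blast
    have "y \<in> PiE {1..f} (\<lambda>_. {1..l})" using y(1) unfolding col_def Vars_def by blast
    thus "z \<in> {1..l}" using y(2) b PiE_mem by fastforce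
  qed
  ultimately have "card (col f l C) \<le> card {1..l}" by (rule card_inj_on_le) simp
  thus ?thesis by simp
qed

lemma flip_in: assumes "S \<in> Assigns f l" "i \<in> Vars f l" shows "S(i := - S i) \<in> Assigns f l"
  using assms by (auto simp: Assigns_def PiE_def Pi_def extensional_def)

lemma val: assumes "S \<in> Assigns f l" "i \<in> Vars f l" shows "S i = -1 \<or> S i = 1"
  using assms by (auto simp: Assigns_def PiE_def Pi_def)

lemma sum_pair_zero: assumes "i \<in> Vars f l" "j \<in> Vars f l" "i \<noteq> j"
  shows "(\<Sum>S\<in>Assigns f l. S i * S j) = 0"
proof -
  let ?A = "Assigns f l"
  have "(\<Sum>S\<in>?A. S i * S j) = (\<Sum>S\<in>?A. (S(i := - S i)) i * (S(i := - S i)) j)"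
    by (rule sum.reindex_bij_witness[of _ "\<lambda>S. S(i := - S i)" "\<lambda>S. S(i := - S i)"])
       (auto simp: flip_in[OF _ assms(1)])
  also have "\<dots> = (\<Sum>S\<in>?A. - (S i * S j))" using assms(3) by simp
  also have "\<dots> = - (\<Sum>S\<in>?A. S i * S j)" by (rule sum_negf)
  finally show ?thesis by simp
qed

lemma sum_sq: assumes "C \<in> Cols f l"
  shows "(\<Sum>S\<in>Assigns f l. (\<Sum>i\<in>col f l C. S i)^2) = int (card (Assigns f l) * card (col f l C))"
proof -
  let ?A = "Assigns f l" and ?c = "col f l C"
  have "(\<Sum>S\<in>?A. (\<Sum>i\<in>?c. S i)^2) = (\<Sum>S\<in>?A. \<Sum>i\<in>?c. \<Sum>j\<in>?c. S i * S j)"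
    by (simp add: power2_eq_square sum_product)
  also have "\<dots> = (\<Sum>i\<in>?c. \<Sum>j\<in>?c. \<Sum>S\<in>?A. S i * S j)"
  proof -
    have "(\<Sum>S\<in>?A. \<Sum>i\<in>?c. \<Sum>j\<in>?c. S i * S j) = (\<Sum>i\<in>?c. \<Sum>S\<in>?A. \<Sum>j\<in>?c. S i * S j)"
      by (rule sum.swap)
    also have "\<dots> = (\<Sum>i\<in>?c. \<Sum>j\<in>?c. \<Sum>S\<in>?A. S i * S j)"
      by (rule sum.cong[OF refl], rule sum.swap)
    finally show ?thesis .
  qed
  also have "\<dots> = (\<Sum>i\<in>?c. \<Sum>j\<in>?c. if i = j then int (card ?A) else 0)"
  proof (intro sum.cong refl)
    fix i j assume ij: "i \<in> ?c" "j \<in> ?c"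
    hence v: "i \<in> Vars f l" "j \<in> Vars f l" using col_sub[of f l C] by blast+
    show "(\<Sum>S\<in>?A. S i * S j) = (if i = j then int (card ?A) else 0)"
    proof (cases "i = j")
      case True
      have "(\<Sum>S\<in>?A. S i * S j) = (\<Sum>S\<in>?A. 1)"
      proof (rule sum.cong)
        fix S assume "S \<in> ?A"
        hence "S i = -1 \<or> S i = 1" using val v(1) by blast
        thus "S i * S j = 1" using True by auto
      qed simp
      thus ?thesis using True by simp
    qed (use sum_pair_zero v in auto)
  qed
  also have "\<dots> = int (card ?A * card ?c)" by (simp add: finite_col)
  finally show ?thesis .
qed



definition csum :: "nat \<Rightarrow> nat \<Rightarrow> nat \<times> (nat \<Rightarrow> nat) \<Rightarrow> ((nat \<Rightarrow> nat) \<Rightarrow> int) \<Rightarrow> int" where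
  "csum f l C S = (\<Sum>i\<in>col f l C. S i)"
definition vec :: "nat \<Rightarrow> nat \<Rightarrow> ((nat \<Rightarrow> nat) \<Rightarrow> int) \<Rightarrow> nat \<times> (nat \<Rightarrow> nat) \<Rightarrow> int" where
  "vec f l S = restrict (\<lambda>C. csum f l C S) (Cols f l)"
definition fib :: "nat \<Rightarrow> nat \<Rightarrow> ((nat \<Rightarrow> nat) \<Rightarrow> int) \<Rightarrow> ((nat \<Rightarrow> nat) \<Rightarrow> int) set" where
  "fib f l S = {T \<in> Assigns f l. vec f l T = vec f l S}"
definition gw :: "nat \<Rightarrow> int \<Rightarrow> real" where
  "gw l m = exp (- ((real_of_int m)^2) / real l)"
definition W :: "nat \<Rightarrow> nat \<Rightarrow> (nat \<times> (nat \<Rightarrow> nat) \<Rightarrow> int) \<Rightarrow> real" where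
  "W f l M = (\<Prod>C\<in>Cols f l. gw l (M C))"

lemma W_nonneg: "0 \<le> W f l M" unfolding W_def gw_def by (simp add: prod_nonneg)

lemma lower:
  assumes "l \<ge> 1"
  shows "real (card (Assigns f l)) * exp (- real (card (Cols f l))) \<le> (\<Sum>S\<in>Assigns f l. W f l (vec f l S))"
proof -
  let ?A = "Assigns f l" and ?n = "real (card (Cols f l))"
  define Y where "Y S = (\<Sum>C\<in>Cols f l. - ((real_of_int (csum f l C S))^2) / real l)" for S
  have WY: "W f l (vec f l S) = exp (Y S)" for S
    unfolding W_def Y_def gw_def vec_def by (simp add: exp_sum finite_Cols)
  have sq: "(\<Sum>S\<in>?A. (real_of_int (csum f l C S))^2) \<le> real (card ?A) * real l" if C: "C \<in> Cols f l" for C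
  proof -
    have "(\<Sum>S\<in>?A. (real_of_int (csum f l C S))^2) = real_of_int (\<Sum>S\<in>?A. (csum f l C S)^2)" by simp
    also have "\<dots> = real (card ?A * card (col f l C))" unfolding csum_def using sum_sq[OF C] by simp
    also have "\<dots> \<le> real (card ?A) * real l" using card_col[OF C] by (simp add: mult_left_mono)
    finally show ?thesis .
  qed
  have sumY: "(\<Sum>S\<in>?A. Y S) \<ge> - real (card ?A) * ?n"
  proof -
    have "(\<Sum>S\<in>?A. Y S) = (\<Sum>C\<in>Cols f l. - (\<Sum>S\<in>?A. (real_of_int (csum f l C S))^2) / real l)"
      unfolding Y_def by (subst sum.swap) (simp add: sum_negf sum_divide_distrib)
    also have "\<dots> \<ge> (\<Sum>C\<in>Cols f l. - real (card ?A))"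
    proof (rule sum_mono)
      fix C assume C: "C \<in> Cols f l"
      have "(\<Sum>S\<in>?A. (real_of_int (csum f l C S))^2) / real l \<le> real (card ?A)"
        using sq[OF C] assms by (simp add: divide_le_eq)
      thus "- real (card ?A) \<le> - (\<Sum>S\<in>?A. (real_of_int (csum f l C S))^2) / real l" by simp
    qed
    finally show ?thesis by (simp add: mult.commute)
  qed
  have tan: "exp (- ?n) * (1 + Y S + ?n) \<le> exp (Y S)" for S
  proof -
    have "1 + (Y S + ?n) \<le> exp (Y S + ?n)" by (rule exp_ge_add_one_self)
    hence "exp (- ?n) * (1 + (Y S + ?n)) \<le> exp (- ?n) * exp (Y S + ?n)" by (simp add: mult_left_mono)
    also have "\<dots> = exp (Y S)" by (simp add: exp_add[symmetric])
    finally show ?thesis by (simp add: add.assoc)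
  qed
  have "real (card ?A) * exp (- ?n) \<le> exp (- ?n) * (\<Sum>S\<in>?A. (1 + Y S + ?n))"
  proof -
    have "(\<Sum>S\<in>?A. (1 + Y S + ?n)) = real (card ?A) + (\<Sum>S\<in>?A. Y S) + real (card ?A) * ?n"
      by (simp add: sum.distrib)
    also have "\<dots> \<ge> real (card ?A)" using sumY by simp
    finally show ?thesis by (simp add: mult.commute mult_left_mono)
  qed
  also have "\<dots> = (\<Sum>S\<in>?A. exp (- ?n) * (1 + Y S + ?n))" by (simp add: sum_distrib_left)
  also have "\<dots> \<le> (\<Sum>S\<in>?A. exp (Y S))" by (rule sum_mono) (rule tan)
  finally show ?thesis by (simp add: WY)
qed



lemma csum_bound: assumes "S \<in> Assigns f l" "C \<in> Cols f l"
  shows "\<bar>csum f l C S\<bar> \<le> int (card (Vars f l))"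
proof -
  have "\<bar>csum f l C S\<bar> \<le> (\<Sum>i\<in>col f l C. \<bar>S i\<bar>)" unfolding csum_def by (rule sum_abs)
  also have "\<dots> = (\<Sum>i\<in>col f l C. 1)"
  proof (rule sum.cong[OF refl])
    fix i assume "i \<in> col f l C"
    hence "i \<in> Vars f l" using col_sub by blast
    hence "S i = -1 \<or> S i = 1" using val assms(1) by blast
    thus "\<bar>S i\<bar> = 1" by auto
  qed
  also have "\<dots> = int (card (col f l C))" by simp
  also have "\<dots> \<le> int (card (Vars f l))" using card_mono[OF finite_Vars col_sub] by simp
  finally show ?thesis .
qed

lemma upper:
  fixes f l :: nat and K :: int
  assumes K_def: "K = int (card (Vars f l))"
  shows "(\<Sum>S\<in>Assigns f l. W f l (vec f l S) / real (card (fib f l S)))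
     \<le> (\<Sum>m\<in>{-K..K}. gw l m) ^ card (Cols f l)"
proof -
  let ?A = "Assigns f l"
  have "(\<Sum>S\<in>?A. W f l (vec f l S) / real (card (fib f l S)))
     = (\<Sum>M\<in>vec f l ` ?A. \<Sum>S\<in>{S. S \<in> ?A \<and> vec f l S = M}. W f l (vec f l S) / real (card (fib f l S)))"
    by (rule sum.image_gen[OF finite_Assigns])
  also have "\<dots> = (\<Sum>M\<in>vec f l ` ?A. W f l M)"
  proof (rule sum.cong[OF refl])
    fix M assume M: "M \<in> vec f l ` ?A"
    let ?X = "{S. S \<in> ?A \<and> vec f l S = M}"
    have X: "fib f l S = ?X" if "S \<in> ?X" for S using that unfolding fib_def by auto
    have fin: "finite ?X" using finite_Assigns by simp
    have ne: "?X \<noteq> {}" using M by auto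
    have "(\<Sum>S\<in>?X. W f l (vec f l S) / real (card (fib f l S))) = (\<Sum>S\<in>?X. W f l M / real (card ?X))"
      by (rule sum.cong[OF refl]) (simp add: X)
    also have "\<dots> = W f l M" using fin ne by simp
    finally show "(\<Sum>S\<in>?X. W f l (vec f l S) / real (card (fib f l S))) = W f l M" .
  qed
  also have "\<dots> \<le> (\<Sum>M\<in>PiE (Cols f l) (\<lambda>_. {-K..K}). W f l M)"
  proof (rule sum_mono2)
    show "finite (PiE (Cols f l) (\<lambda>_. {-K..K}))" by (simp add: finite_PiE finite_Cols)
    show "vec f l ` ?A \<subseteq> PiE (Cols f l) (\<lambda>_. {-K..K})"
    proof
      fix M assume "M \<in> vec f l ` ?A"
      then obtain S where S: "S \<in> ?A" "M = vec f l S" by blast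
      have "\<And>C. C \<in> Cols f l \<Longrightarrow> csum f l C S \<in> {-K..K}"
      proof -
        fix C assume "C \<in> Cols f l"
        thus "csum f l C S \<in> {-K..K}" using csum_bound[OF S(1), of C] unfolding K_def by (simp add: abs_le_iff)
      qed
      thus "M \<in> PiE (Cols f l) (\<lambda>_. {-K..K})" unfolding S(2) vec_def by (simp add: restrict_PiE_iff)
    qed
    show "\<And>M. 0 \<le> W f l M" by (rule W_nonneg)
  qed
  also have "\<dots> = (\<Prod>C\<in>Cols f l. \<Sum>m\<in>{-K..K}. gw l m)"
    unfolding W_def by (rule prod_sum_PiE[symmetric]) (simp_all add: finite_Cols)
  also have "\<dots> = (\<Sum>m\<in>{-K..K}. gw l m) ^ card (Cols f l)" by simp
  finally show ?thesis .
qed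



lemma geo_part:
  fixes r :: real and X :: "int set"
  assumes "0 < r" "r < 1" "finite X" "inj_on (\<lambda>m. nat \<bar>m\<bar>) X"
  shows "(\<Sum>m\<in>X. r ^ nat \<bar>m\<bar>) \<le> 1 / (1 - r)"
proof -
  have "(\<Sum>m\<in>X. r ^ nat \<bar>m\<bar>) = (\<Sum>k\<in>(\<lambda>m. nat \<bar>m\<bar>) ` X. r ^ k)"
    by (rule sum.reindex[symmetric, unfolded comp_def]) (rule assms(4))
  also have "\<dots> < 1 / (1 - r)" by (rule geometric_sum_less) (use assms in auto)
  finally show ?thesis by simp
qed

lemma Gbound:
  fixes K :: int
  assumes l: "l \<ge> 1"
  shows "(\<Sum>m\<in>{-K..K}. gw l m) \<le> 12 * sqrt (real l)"
proof -
  define u where "u = 1 / sqrt (real l)"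
  define r where "r = exp (- u)"
  have sl: "sqrt (real l) \<ge> 1" using l by simp
  have u0: "0 < u" "u \<le> 1" unfolding u_def using sl by auto
  have r0: "0 < r" "r < 1" unfolding r_def using u0 by auto
  have pt: "gw l m \<le> 3 * r ^ nat \<bar>m\<bar>" for m
  proof -
    define t where "t = \<bar>real_of_int m\<bar> / sqrt (real l)"
    have t2: "(real_of_int m)^2 / real l = t^2"
    proof -
      have "t^2 = \<bar>real_of_int m\<bar>^2 / (sqrt (real l))^2" by (simp add: t_def power_divide)
      also have "\<dots> = (real_of_int m)^2 / real l" by simp
      finally show ?thesis by (rule sym)
    qed
    have "gw l m = exp (- ((real_of_int m)^2 / real l))" unfolding gw_def by simp
    also have "\<dots> = exp (- (t^2))" by (simp only: t2)
    also have "\<dots> \<le> exp (1/4 - t)"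
    proof -
      have "0 \<le> (t - 1/2)^2" by simp
      hence "- (t^2) \<le> 1/4 - t" by (simp add: power2_eq_square algebra_simps)
      thus ?thesis by simp
    qed
    also have "\<dots> = exp (1/4) * exp (- t)" by (simp add: exp_add[symmetric])
    also have "\<dots> \<le> 3 * exp (- t)"
    proof -
      have "exp (1/4::real) \<le> exp 1" by simp
      also have "\<dots> \<le> 3" by (rule exp_le)
      finally show ?thesis by simp
    qed
    also have "exp (- t) = r ^ nat \<bar>m\<bar>"
    proof -
      have "- t = real (nat \<bar>m\<bar>) * (- u)" unfolding t_def u_def by simp
      hence "exp (- t) = exp (real (nat \<bar>m\<bar>) * (- u))" by simp
      also have "\<dots> = exp (- u) ^ nat \<bar>m\<bar>" by (rule exp_of_nat_mult)
      finally show ?thesis unfolding r_def .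
    qed
    finally show ?thesis .
  qed
  have "(\<Sum>m\<in>{-K..K}. gw l m) \<le> (\<Sum>m\<in>{-K..K}. 3 * r ^ nat \<bar>m\<bar>)" by (rule sum_mono) (rule pt)
  also have "\<dots> = 3 * (\<Sum>m\<in>{-K..K}. r ^ nat \<bar>m\<bar>)" by (simp add: sum_distrib_left)
  also have "(\<Sum>m\<in>{-K..K}. r ^ nat \<bar>m\<bar>) \<le> 2 / (1 - r)"
  proof -
    have split: "{-K..K} = {m\<in>{-K..K}. m < 0} \<union> {m\<in>{-K..K}. 0 \<le> m}" by auto
    have "(\<Sum>m\<in>{-K..K}. r ^ nat \<bar>m\<bar>) = (\<Sum>m\<in>{m\<in>{-K..K}. m < 0}. r ^ nat \<bar>m\<bar>) + (\<Sum>m\<in>{m\<in>{-K..K}. 0 \<le> m}. r ^ nat \<bar>m\<bar>)"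
      by (subst split, rule sum.union_disjoint) (auto intro: finite_subset[of _ "{-K..K}"])
    also have "\<dots> \<le> 1 / (1 - r) + 1 / (1 - r)"
    proof (rule add_mono; rule geo_part)
      show "inj_on (\<lambda>m. nat \<bar>m\<bar>) {m\<in>{-K..K}. m < 0}" by (rule inj_onI) auto
      show "inj_on (\<lambda>m. nat \<bar>m\<bar>) {m\<in>{-K..K}. 0 \<le> m}" by (rule inj_onI) auto
    qed (use r0 in \<open>auto intro: finite_subset[of _ "{-K..K}"]\<close>)
    finally show ?thesis by simp
  qed
  hence "3 * (\<Sum>m\<in>{-K..K}. r ^ nat \<bar>m\<bar>) \<le> 3 * (2 / (1 - r))" by simp
  also have "2 / (1 - r) \<le> 4 * sqrt (real l)"
  proof -
    have "1 + u \<le> exp u" by (rule exp_ge_add_one_self)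
    hence "r \<le> 1 / (1 + u)" unfolding r_def using u0 by (simp add: exp_minus field_simps)
    hence "1 - r \<ge> u / (1 + u)" using u0 by (simp add: field_simps)
    moreover have "u / (1 + u) \<ge> u / 2" using u0 by (intro divide_left_mono) auto
    ultimately have "1 - r \<ge> u / 2" by linarith
    hence "2 / (1 - r) \<le> 2 / (u / 2)" using u0 by (intro divide_left_mono) auto
    also have "\<dots> = 4 * sqrt (real l)" unfolding u_def using sl by simp
    finally show ?thesis .
  qed
  finally show ?thesis by simp
qed



lemma d_support:
  assumes S: "S \<in> Assigns f l" and T: "T \<in> Assigns f l"
  shows "{x. T x - S x \<noteq> 0} = {i \<in> Vars f l. T i \<noteq> S i}"
proof (intro set_eqI)
  fix x
  show "x \<in> {x. T x - S x \<noteq> 0} \<longleftrightarrow> x \<in> {i \<in> Vars f l. T i \<noteq> S i}"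
  proof (cases "x \<in> Vars f l")
    case False
    have S': "S \<in> PiE (Vars f l) (\<lambda>_. {-1, 1})" using S unfolding Assigns_def .
    have T': "T \<in> PiE (Vars f l) (\<lambda>_. {-1, 1})" using T unfolding Assigns_def .
    have "S x = undefined" by (rule PiE_arb[OF S' False])
    moreover have "T x = undefined" by (rule PiE_arb[OF T' False])
    ultimately show ?thesis using False by simp
  qed simp
qed

lemma line_sum:
  assumes S: "S \<in> Assigns f l" and T: "T \<in> Assigns f l"
    and eq: "vec f l T = vec f l S" and a: "a \<in> {1..f}"
  shows "(\<Sum>y\<in>{y. T y - S y \<noteq> 0 \<and> (\<forall>b. b \<noteq> a \<longrightarrow> y b = x b)}. T y - S y) = 0"
proof (cases "{y. T y - S y \<noteq> 0 \<and> (\<forall>b. b \<noteq> a \<longrightarrow> y b = x b)} = {}")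
  case True thus ?thesis by (simp only: sum.empty)
next
  case False
  let ?L = "{y. T y - S y \<noteq> 0 \<and> (\<forall>b. b \<noteq> a \<longrightarrow> y b = x b)}"
  obtain y0 where y0: "y0 \<in> ?L" using False by (meson ex_in_conv)
  have supp: "{x. T x - S x \<noteq> 0} = {i \<in> Vars f l. T i \<noteq> S i}" by (rule d_support[OF S T])
  have "y0 \<in> {x. T x - S x \<noteq> 0}" using y0 by simp
  hence y0V: "y0 \<in> Vars f l" unfolding supp by simp
  define C where "C = (a, restrict y0 ({1..f} - {a}))"
  have y0P: "y0 \<in> PiE {1..f} (\<lambda>_. {1..l})" using y0V unfolding Vars_def .
  have "restrict y0 ({1..f} - {a}) \<in> PiE ({1..f} - {a}) (\<lambda>_. {1..l})"
    unfolding restrict_PiE_iff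
  proof
    fix i assume "i \<in> {1..f} - {a}"
    hence "i \<in> {1..f}" by blast
    thus "y0 i \<in> {1..l}" using PiE_mem[OF y0P] by blast
  qed
  hence C: "C \<in> Cols f l" unfolding C_def Cols_def using a by (rule SigmaI[rotated])
  have y0x: "\<And>b. b \<noteq> a \<Longrightarrow> y0 b = x b" using y0 by simp
  have Leq: "?L = {y \<in> col f l C. T y - S y \<noteq> 0}"
  proof (intro set_eqI iffI)
    fix y assume y: "y \<in> ?L"
    hence "y \<in> {x. T x - S x \<noteq> 0}" by simp
    hence yV: "y \<in> Vars f l" unfolding supp by simp
    have yx: "\<And>b. b \<noteq> a \<Longrightarrow> y b = x b" using y by blast
    have "\<forall>b\<in>{1..f} - {a}. y b = restrict y0 ({1..f} - {a}) b"
    proof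
      fix b assume b: "b \<in> {1..f} - {a}"
      hence "b \<noteq> a" by blast
      hence "y b = y0 b" using yx y0x by metis
      thus "y b = restrict y0 ({1..f} - {a}) b" using b by simp
    qed
    hence "y \<in> col f l C" using yV unfolding col_def C_def by simp
    moreover have "T y - S y \<noteq> 0" using y by blast
    ultimately show "y \<in> {y \<in> col f l C. T y - S y \<noteq> 0}" by blast
  next
    fix y assume y: "y \<in> {y \<in> col f l C. T y - S y \<noteq> 0}"
    hence yc: "y \<in> col f l C" and dy: "T y - S y \<noteq> 0" by blast+
    have yV: "y \<in> Vars f l" and ag: "\<forall>b\<in>{1..f} - {a}. y b = restrict y0 ({1..f} - {a}) b"
      using yc unfolding col_def C_def by simp_all
    have yx1: "y b = x b" if ba: "b \<noteq> a" for b
    proof (cases "b \<in> {1..f}")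
      case True 
      hence "b \<in> {1..f} - {a}" using ba by blast
      hence "y b = y0 b" using ag by simp
      thus ?thesis using y0x[OF ba] by simp
    next
      case False
      have yP: "y \<in> PiE {1..f} (\<lambda>_. {1..l})" using yV unfolding Vars_def .
      have "y b = undefined" using PiE_arb[OF yP False] .
      moreover have "y0 b = undefined" using PiE_arb[OF y0P False] .
      ultimately show ?thesis using y0x[OF ba] by simp
    qed
    have yx2: "\<forall>b. b \<noteq> a \<longrightarrow> y b = x b" using yx1 by blast
    show "y \<in> ?L" unfolding mem_Collect_eq using dy yx2 by blast
  qed
  have "(\<Sum>y\<in>?L. T y - S y) = (\<Sum>y\<in>col f l C. T y - S y)"
    unfolding Leq by (rule sum.mono_neutral_left[OF finite_col]) blast+
  also have "\<dots> = csum f l C T - csum f l C S" unfolding csum_def by (simp add: sum_subtractf)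
  also have "\<dots> = 0"
  proof -
    have "vec f l T C = vec f l S C" using eq by simp
    thus ?thesis using C unfolding vec_def by simp
  qed
  finally show ?thesis .
qed

lemma far_apart:
  assumes S: "S \<in> Assigns f l" and T: "T \<in> Assigns f l"
    and eq: "vec f l T = vec f l S" and ne: "1 \<le> card {i \<in> Vars f l. T i \<noteq> S i}"
  shows "2 ^ f \<le> card {i \<in> Vars f l. T i \<noteq> S i}"
proof -
  have supp: "{x. T x - S x \<noteq> 0} = {i \<in> Vars f l. T i \<noteq> S i}" by (rule d_support[OF S T])
  have "2 ^ card {1..f} \<le> card {x. T x - S x \<noteq> 0}"
  proof (rule support_bound)
    show "finite {1..f::nat}" by simp
    show "finite {x. T x - S x \<noteq> 0}" unfolding supp using finite_Vars by simp
    show "{x. T x - S x \<noteq> 0} \<noteq> {}" unfolding supp using ne by (metis card.empty not_one_le_zero)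
    show "\<forall>a\<in>{1..f}. \<forall>x. (\<Sum>y\<in>{y. T y - S y \<noteq> 0 \<and> (\<forall>b. b \<noteq> a \<longrightarrow> y b = x b)}. T y - S y) = 0"
      using line_sum[OF S T eq] by blast
  qed
  thus ?thesis unfolding supp by simp
qed

lemma Ham_csum: "Ham f l M T = (\<Sum>C\<in>Cols f l. (csum f l C T - M C)^2)"
  unfolding Ham_def csum_def by simp

lemma Ham_nonneg: "0 \<le> Ham f l M T" unfolding Ham_def by (simp add: sum_nonneg)

lemma Ham_zero_iff:
  "Ham f l (\<lambda>C. csum f l C S0) T = 0 \<longleftrightarrow> vec f l T = vec f l S0"
proof -
  have "Ham f l (\<lambda>C. csum f l C S0) T = 0 \<longleftrightarrow> (\<forall>C\<in>Cols f l. (csum f l C T - csum f l C S0)^2 = 0)"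
    unfolding Ham_csum by (rule sum_nonneg_eq_0_iff) (auto simp: finite_Cols)
  also have "\<dots> \<longleftrightarrow> (\<forall>C\<in>Cols f l. csum f l C T = csum f l C S0)" by simp
  also have "\<dots> \<longleftrightarrow> vec f l T = vec f l S0" unfolding vec_def
  proof
    assume h: "\<forall>C\<in>Cols f l. csum f l C T = csum f l C S0"
    show "restrict (\<lambda>C. csum f l C T) (Cols f l) = restrict (\<lambda>C. csum f l C S0) (Cols f l)"
      by (rule restrict_ext) (use h in simp)
  next
    assume h: "restrict (\<lambda>C. csum f l C T) (Cols f l) = restrict (\<lambda>C. csum f l C S0) (Cols f l)"
    show "\<forall>C\<in>Cols f l. csum f l C T = csum f l C S0"
    proof
      fix C assume C: "C \<in> Cols f l"
      from fun_cong[OF h, of C] show "csum f l C T = csum f l C S0" using C by simp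
    qed
  qed
  finally show ?thesis .
qed



lemma count_bound:
  assumes l: "1 \<le> l" and f: "1 \<le> f"
  shows "\<exists>S0\<in>Assigns f l. real (card (fib f l S0)) \<ge> 2 ^ (l ^ f) * ((1/36) / (real f * sqrt (real l))) ^ (f * l ^ (f - 1))"
proof -
  let ?A = "Assigns f l" and ?n = "card (Cols f l)"
  define K where "K = int (card (Vars f l))"
  define G where "G = (\<Sum>m\<in>{-K..K}. gw l m)"
  have G0: "0 \<le> G" unfolding G_def gw_def by (simp add: sum_nonneg)
  have GB: "G \<le> 12 * sqrt (real l)" unfolding G_def by (rule Gbound[OF l])
  have Ane: "?A \<noteq> {}" using card_Assigns[of f l] by (metis card.empty power_not_zero zero_neq_numeral)
  define m where "m = Max ((\<lambda>S. card (fib f l S)) ` ?A)"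
  have "m \<in> (\<lambda>S. card (fib f l S)) ` ?A" unfolding m_def using Ane finite_Assigns by (intro Max_in) auto
  then obtain S0 where S0: "S0 \<in> ?A" "card (fib f l S0) = m" by blast
  have mx: "card (fib f l S) \<le> m" if "S \<in> ?A" for S unfolding m_def using that finite_Assigns by (intro Max_ge) auto
  have fibpos: "card (fib f l S) \<ge> 1" if "S \<in> ?A" for S
  proof -
    have "S \<in> fib f l S" using that unfolding fib_def by simp
    moreover have "finite (fib f l S)" unfolding fib_def using finite_Assigns by simp
    ultimately show ?thesis by (metis One_nat_def Suc_leI card_gt_0_iff empty_iff)
  qed
  have "real (card ?A) * exp (- real ?n) \<le> (\<Sum>S\<in>?A. W f l (vec f l S))" by (rule lower[OF l])
  also have "\<dots> \<le> (\<Sum>S\<in>?A. real m * (W f l (vec f l S) / real (card (fib f l S))))"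
  proof (rule sum_mono)
    fix S assume S: "S \<in> ?A"
    have c1: "real (card (fib f l S)) \<ge> 1" using fibpos[OF S] by simp
    have "W f l (vec f l S) = real (card (fib f l S)) * (W f l (vec f l S) / real (card (fib f l S)))"
      using c1 by simp
    also have "\<dots> \<le> real m * (W f l (vec f l S) / real (card (fib f l S)))"
      by (rule mult_right_mono) (use mx[OF S] W_nonneg c1 in auto)
    finally show "W f l (vec f l S) \<le> real m * (W f l (vec f l S) / real (card (fib f l S)))" .
  qed
  also have "\<dots> = real m * (\<Sum>S\<in>?A. W f l (vec f l S) / real (card (fib f l S)))"
    by (simp add: sum_distrib_left)
  also have "\<dots> \<le> real m * G ^ ?n" unfolding G_def
    by (rule mult_left_mono[OF upper]) (simp_all add: K_def)
  also have "\<dots> \<le> real m * (12 * sqrt (real l)) ^ ?n"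
    by (rule mult_left_mono[OF power_mono]) (use G0 GB in auto)
  finally have key: "real (card ?A) * exp (- real ?n) \<le> real m * (12 * sqrt (real l)) ^ ?n" .
  have sl: "sqrt (real l) \<ge> 1" using l by simp
  have B0: "0 < (12 * sqrt (real l)) ^ ?n" using sl by simp
  have "real (card ?A) * (exp (-1) / (12 * sqrt (real l))) ^ ?n
      = real (card ?A) * exp (- real ?n) / (12 * sqrt (real l)) ^ ?n"
  proof -
    have "exp (- real ?n) = exp (-1) ^ ?n" using exp_of_nat_mult[of ?n "-1"] by simp
    thus ?thesis by (simp add: power_divide)
  qed
  also have "\<dots> \<le> real m" using key B0 by (simp add: divide_le_eq)
  finally have m1: "real (card ?A) * (exp (-1) / (12 * sqrt (real l))) ^ ?n \<le> real m" .
  have base: "(1/36) / (real f * sqrt (real l)) \<le> exp (-1) / (12 * sqrt (real l))"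
  proof -
    have e: "exp (1::real) \<le> 3" by (rule exp_le)
    have "exp 1 * exp (-1) \<le> 3 * exp (-1::real)" using e by (intro mult_right_mono) auto
    moreover have "exp 1 * exp (-1::real) = 1" by (simp add: exp_add[symmetric])
    ultimately have e1: "exp (-1::real) \<ge> 1/3" by linarith
    have fr: "real f \<ge> 1" using f by simp
    have "(1/36) / (real f * sqrt (real l)) \<le> (1/36) / sqrt (real l)"
      using fr sl by (intro divide_left_mono) (auto simp: mult_le_cancel_right1 intro: mult_pos_pos)
    also have "\<dots> = (1/3) / (12 * sqrt (real l))" by simp
    also have "\<dots> \<le> exp (-1) / (12 * sqrt (real l))" using e1 sl by (intro divide_right_mono) auto
    finally show ?thesis .
  qed
  have "2 ^ (l ^ f) * ((1/36) / (real f * sqrt (real l))) ^ (f * l ^ (f - 1))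
      \<le> real (card ?A) * (exp (-1) / (12 * sqrt (real l))) ^ ?n"
    unfolding card_Assigns card_Cols of_nat_power of_nat_numeral
  proof (rule mult_left_mono[OF power_mono])
    show "0 \<le> (1/36) / (real f * sqrt (real l))" by simp
  qed (use base in auto)
  also note m1
  finally show ?thesis using S0 by auto
qed

theorem mainTheorem5:
  shows "\<exists>c::real. c > 0 \<and> (\<forall>f l :: nat. 1 \<le> f \<longrightarrow> 1 \<le> l \<longrightarrow>
     (\<exists>M :: nat \<times> (nat \<Rightarrow> nat) \<Rightarrow> int.
        real (card {S. global_min f l M S}) \<ge> 2 ^ (l ^ f) * (c / (real f * sqrt (real l))) ^ (f * l ^ (f - 1)) \<and>
        (\<forall>S. global_min f l M S \<longrightarrow> k_min f l M (2 ^ f - 1) S)))"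
proof (intro exI[of _ "1/36"] conjI allI impI)
  show "(0::real) < 1/36" by simp
  fix f l :: nat assume f: "1 \<le> f" and l: "1 \<le> l"
  obtain S0 where S0: "S0 \<in> Assigns f l"
    and cnt: "real (card (fib f l S0)) \<ge> 2 ^ (l ^ f) * ((1/36) / (real f * sqrt (real l))) ^ (f * l ^ (f - 1))"
    using count_bound[OF l f] by blast
  define M where "M = (\<lambda>C. csum f l C S0)"
  have H0: "Ham f l M S0 = 0" unfolding M_def using Ham_zero_iff by blast
  have gm: "global_min f l M T \<longleftrightarrow> T \<in> fib f l S0" for T
  proof
    assume g: "global_min f l M T"
    hence TA: "T \<in> Assigns f l" and "Ham f l M T \<le> Ham f l M S0"
      unfolding global_min_def using S0 by auto
    hence "Ham f l M T = 0" using H0 Ham_nonneg[of f l M T] by simp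
    hence "vec f l T = vec f l S0" unfolding M_def using Ham_zero_iff by blast
    thus "T \<in> fib f l S0" using TA unfolding fib_def by simp
  next
    assume "T \<in> fib f l S0"
    hence TA: "T \<in> Assigns f l" and "vec f l T = vec f l S0" unfolding fib_def by auto
    hence "Ham f l M T = 0" unfolding M_def using Ham_zero_iff by blast
    thus "global_min f l M T" unfolding global_min_def using TA Ham_nonneg by simp
  qed
  show "\<exists>M :: nat \<times> (nat \<Rightarrow> nat) \<Rightarrow> int.
        real (card {S. global_min f l M S}) \<ge> 2 ^ (l ^ f) * ((1/36) / (real f * sqrt (real l))) ^ (f * l ^ (f - 1)) \<and>
        (\<forall>S. global_min f l M S \<longrightarrow> k_min f l M (2 ^ f - 1) S)"
  proof (rule exI[of _ M], rule conjI)
  have "{S. global_min f l M S} = fib f l S0" using gm by blast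
  thus "real (card {S. global_min f l M S}) \<ge> 2 ^ (l ^ f) * ((1/36) / (real f * sqrt (real l))) ^ (f * l ^ (f - 1))"
    using cnt by simp
  show "\<forall>S. global_min f l M S \<longrightarrow> k_min f l M (2 ^ f - 1) S"
  proof (intro allI impI)
    fix S assume gS: "global_min f l M S"
    hence SA: "S \<in> Assigns f l" unfolding global_min_def by simp
    have SF: "S \<in> fib f l S0" using gS gm by blast
    hence vS: "vec f l S = vec f l S0" unfolding fib_def by simp
    have HS: "Ham f l M S = 0" unfolding M_def using Ham_zero_iff vS by blast
    show "k_min f l M (2 ^ f - 1) S" unfolding k_min_def
    proof (intro conjI ballI impI)
      show "S \<in> Assigns f l" by (rule SA)
      fix T assume TA: "T \<in> Assigns f l"
        and cd: "1 \<le> card {i \<in> Vars f l. T i \<noteq> S i} \<and> card {i \<in> Vars f l. T i \<noteq> S i} \<le> 2 ^ f - 1"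
      show "Ham f l M S < Ham f l M T"
      proof (rule ccontr)
        assume "\<not> Ham f l M S < Ham f l M T"
        hence "Ham f l M T = 0" using HS Ham_nonneg[of f l M T] by simp
        hence "vec f l T = vec f l S0" unfolding M_def using Ham_zero_iff by blast
        hence "vec f l T = vec f l S" using vS by simp
        hence "2 ^ f \<le> card {i \<in> Vars f l. T i \<noteq> S i}" using far_apart[OF SA TA] cd by blast
        moreover have "(1::nat) \<le> 2 ^ f" by simp
        ultimately show False using cd by linarith
      qed
    qed
  qed
  qed
qed

end
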